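(* Let $d\ge2$, let $L\subseteq\mathbb{R}^d$ be a linear subspace, $p^\star\in L$, $\zeta>0$, and $h\in L$ a unit vector. Let $q$ be a point drawn uniformly at random from the ball $\mathcal{B}_L(p^\star,\zeta)=\{z\in L:\|z-p^\star\|_2\le\zeta\}$. Then with probability at least $\frac{1}{20\sqrt{d-1}}$, $\langle h,q\rangle\ge\langle h,p^\star\rangle+\frac{\zeta\ln(3/2)}{\sqrt{d-1}}$. *)

theory Defs
  imports "HOL-Analysis.Analysis"
begin

text \<open>Uniform distribution on the ball B_L(p, r) = {z \<in> L. norm (z - p) \<le> r} of a linear
  subspace L, where L is parametrised by a linear isometry g from a Euclidean space 'k onto L
  (so DIM('k) = dim L). It is the push-forward of the normalised Lebesgue measure on the
  ball cball 0 r of 'k under y \<mapsto> p + g y; this is the normalised dim(L)-dimensional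
  volume measure on B_L(p, r) and does not depend on the choice of g.\<close>
definition uniform_subspace_ball ::
    "('k::euclidean_space \<Rightarrow> 'a::euclidean_space) \<Rightarrow> 'a \<Rightarrow> real \<Rightarrow> 'a measure" where
  "uniform_subspace_ball g p r =
     distr (uniform_measure lborel (cball 0 r)) borel (\<lambda>y. p + g y)"

end

theory Submission
  imports Defs
begin


lemma nn_integral_lborel_split:
  fixes g :: "'k::euclidean_space \<Rightarrow> ennreal"
  assumes i: "i \<in> Basis" and [measurable]: "g \<in> borel_measurable borel"
  shows "(\<integral>\<^sup>+ y. g y \<partial>lborel) =
    (\<integral>\<^sup>+ x. (\<integral>\<^sup>+ t. g ((\<Sum>b\<in>Basis - {i}. x b *\<^sub>R b) + t *\<^sub>R i) \<partial>lborel) \<partial>(Pi\<^sub>M (Basis - {i}) (\<lambda>_. lborel)))"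
proof -
  interpret product_sigma_finite "\<lambda>_. lborel" by standard
  have B: "Basis = insert i (Basis - {i})" using i by auto
  have "(\<integral>\<^sup>+ y. g y \<partial>lborel) = (\<integral>\<^sup>+ f. g (\<Sum>b\<in>Basis. f b *\<^sub>R b) \<partial>(Pi\<^sub>M Basis (\<lambda>_. lborel)))"
    by (subst lborel_eq) (simp add: nn_integral_distr)
  also have "\<dots> = (\<integral>\<^sup>+ f. g (\<Sum>b\<in>Basis. f b *\<^sub>R b) \<partial>(Pi\<^sub>M (insert i (Basis - {i})) (\<lambda>_. lborel)))"
    using B by simp
  also have "\<dots> = (\<integral>\<^sup>+ x. (\<integral>\<^sup>+ t. g (\<Sum>b\<in>Basis. (x(i:=t)) b *\<^sub>R b) \<partial>lborel) \<partial>(Pi\<^sub>M (Basis - {i}) (\<lambda>_. lborel)))"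
    by (subst product_nn_integral_insert) auto
  also have "\<dots> = (\<integral>\<^sup>+ x. (\<integral>\<^sup>+ t. g ((\<Sum>b\<in>Basis - {i}. x b *\<^sub>R b) + t *\<^sub>R i) \<partial>lborel) \<partial>(Pi\<^sub>M (Basis - {i}) (\<lambda>_. lborel)))"
  proof (intro nn_integral_cong)
    fix x t
    have "(\<Sum>b\<in>Basis. (x(i:=t)) b *\<^sub>R b) = (\<Sum>b\<in>insert i (Basis - {i}). (x(i:=t)) b *\<^sub>R b)"
      using B by simp
    also have "\<dots> = t *\<^sub>R i + (\<Sum>b\<in>Basis - {i}. (x(i:=t)) b *\<^sub>R b)"
      by (subst sum.insert) auto
    also have "(\<Sum>b\<in>Basis - {i}. (x(i:=t)) b *\<^sub>R b) = (\<Sum>b\<in>Basis - {i}. x b *\<^sub>R b)"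
      by (intro sum.cong) auto
    finally show "g (\<Sum>b\<in>Basis. (x(i:=t)) b *\<^sub>R b) = g ((\<Sum>b\<in>Basis - {i}. x b *\<^sub>R b) + t *\<^sub>R i)"
      by (simp add: add.commute)
  qed
  finally show ?thesis .
qed

lemma shear_preserves:
  fixes f :: "'k::euclidean_space \<Rightarrow> ennreal"
  assumes i: "i \<in> Basis" and j: "j \<in> Basis" and ij: "i \<noteq> j"
    and [measurable]: "f \<in> borel_measurable borel"
  shows "(\<integral>\<^sup>+ y. f (y + (a * (y \<bullet> j)) *\<^sub>R i) \<partial>lborel) = (\<integral>\<^sup>+ y. f y \<partial>lborel)"
proof -
  have [measurable]: "(\<lambda>y::'k. f (y + (a * (y \<bullet> j)) *\<^sub>R i)) \<in> borel_measurable borel"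
    by measurable
  let ?P = "Pi\<^sub>M (Basis - {i}) (\<lambda>_. (lborel::real measure))"
  have L: "(\<integral>\<^sup>+ y. f (y + (a * (y \<bullet> j)) *\<^sub>R i) \<partial>lborel) =
    (\<integral>\<^sup>+ x. (\<integral>\<^sup>+ t. f (((\<Sum>b\<in>Basis - {i}. x b *\<^sub>R b) + t *\<^sub>R i) + (a * (((\<Sum>b\<in>Basis - {i}. x b *\<^sub>R b) + t *\<^sub>R i) \<bullet> j)) *\<^sub>R i) \<partial>lborel) \<partial>?P)"
    by (rule nn_integral_lborel_split[OF i]) measurable
  have R: "(\<integral>\<^sup>+ y. f y \<partial>lborel) =
    (\<integral>\<^sup>+ x. (\<integral>\<^sup>+ t. f ((\<Sum>b\<in>Basis - {i}. x b *\<^sub>R b) + t *\<^sub>R i) \<partial>lborel) \<partial>?P)"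
    by (rule nn_integral_lborel_split[OF i]) measurable
  have C: "(\<integral>\<^sup>+ x. (\<integral>\<^sup>+ t. f (((\<Sum>b\<in>Basis - {i}. x b *\<^sub>R b) + t *\<^sub>R i) + (a * (((\<Sum>b\<in>Basis - {i}. x b *\<^sub>R b) + t *\<^sub>R i) \<bullet> j)) *\<^sub>R i) \<partial>lborel) \<partial>?P)
     = (\<integral>\<^sup>+ x. (\<integral>\<^sup>+ t. f ((\<Sum>b\<in>Basis - {i}. x b *\<^sub>R b) + t *\<^sub>R i) \<partial>lborel) \<partial>?P)"
  proof (rule nn_integral_cong)
    fix x :: "'k \<Rightarrow> real"
    define w where "w = (\<Sum>b\<in>Basis - {i}. x b *\<^sub>R b)"
    have wj: "w \<bullet> j = x j"
      unfolding w_def using i j ij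
      by (simp add: inner_sum_left inner_Basis if_distrib sum.delta cong: if_cong)
    have eq: "\<And>t. (w + t *\<^sub>R i) + (a * ((w + t *\<^sub>R i) \<bullet> j)) *\<^sub>R i = w + (a * x j + 1 * t) *\<^sub>R i"
      using wj i j ij by (simp add: inner_simps inner_Basis algebra_simps)
    have "(\<integral>\<^sup>+ t. f ((w + t *\<^sub>R i) + (a * ((w + t *\<^sub>R i) \<bullet> j)) *\<^sub>R i) \<partial>lborel)
        = (\<integral>\<^sup>+ t. f (w + (a * x j + 1 * t) *\<^sub>R i) \<partial>lborel)" by (simp only: eq)
    also have "\<dots> = (\<integral>\<^sup>+ t. f (w + t *\<^sub>R i) \<partial>lborel)"
      using nn_integral_real_affine[of "\<lambda>t. f (w + t *\<^sub>R i)" 1 "a * x j"] by simp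
    finally show "(\<integral>\<^sup>+ t. f (((\<Sum>b\<in>Basis - {i}. x b *\<^sub>R b) + t *\<^sub>R i) + (a * (((\<Sum>b\<in>Basis - {i}. x b *\<^sub>R b) + t *\<^sub>R i) \<bullet> j)) *\<^sub>R i) \<partial>lborel)
        = (\<integral>\<^sup>+ t. f ((\<Sum>b\<in>Basis - {i}. x b *\<^sub>R b) + t *\<^sub>R i) \<partial>lborel)"
      unfolding w_def .
  qed
  show ?thesis using L R C by simp
qed


definition mpres :: "('k::euclidean_space \<Rightarrow> 'k) \<Rightarrow> bool" where
  "mpres T \<longleftrightarrow> linear T \<and> (\<forall>y. norm (T y) = norm y) \<and>
     (\<forall>f::'k \<Rightarrow> ennreal. f \<in> borel_measurable borel \<longrightarrow> (\<integral>\<^sup>+ y. f (T y) \<partial>lborel) = (\<integral>\<^sup>+ y. f y \<partial>lborel))"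

lemma linear_borel_measurable:
  fixes T :: "'k::euclidean_space \<Rightarrow> 'm::euclidean_space"
  assumes "linear T" shows "T \<in> borel_measurable borel"
  by (intro borel_measurable_continuous_onI linear_continuous_on)
     (use assms linear_conv_bounded_linear in auto)

lemma mpres_comp:
  assumes "mpres S" "mpres T" shows "mpres (S \<circ> T)"
proof -
  have lS: "linear S" and lT: "linear T" using assms by (auto simp: mpres_def)
  have mS: "S \<in> borel_measurable borel" by (rule linear_borel_measurable[OF lS])
  show ?thesis unfolding mpres_def
  proof (intro conjI allI impI)
    show "linear (S \<circ> T)" using lS lT by (simp add: linear_compose)
    show "norm ((S \<circ> T) y) = norm y" for y using assms by (auto simp: mpres_def)
    fix f :: "'a \<Rightarrow> ennreal" assume f: "f \<in> borel_measurable borel"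
    have fS: "(\<lambda>y. f (S y)) \<in> borel_measurable borel"
      using measurable_comp[OF mS f] by (simp add: comp_def)
    have "(\<integral>\<^sup>+ y. f ((S \<circ> T) y) \<partial>lborel) = (\<integral>\<^sup>+ y. (\<lambda>y. f (S y)) (T y) \<partial>lborel)" by simp
    also have "\<dots> = (\<integral>\<^sup>+ y. f (S y) \<partial>lborel)" using assms(2) fS by (auto simp: mpres_def)
    also have "\<dots> = (\<integral>\<^sup>+ y. f y \<partial>lborel)" using assms(1) f by (auto simp: mpres_def)
    finally show "(\<integral>\<^sup>+ y. f ((S \<circ> T) y) \<partial>lborel) = (\<integral>\<^sup>+ y. f y \<partial>lborel)" .
  qed
qed

lemma mpres_uminus: "mpres (uminus :: 'k::euclidean_space \<Rightarrow> 'k)"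
  unfolding mpres_def
proof (intro conjI allI impI)
  show "linear (uminus :: 'k \<Rightarrow> 'k)" by (rule linear_uminus)
  show "norm (- y) = norm y" for y :: 'k by simp
  fix f :: "'k \<Rightarrow> ennreal" assume [measurable]: "f \<in> borel_measurable borel"
  have "(lborel :: 'k measure) = distr lborel borel uminus"
    using lborel_affine[of "-1::real" "0::'k"] by (simp add: density_1)
  then have "(\<integral>\<^sup>+ y. f y \<partial>(lborel :: 'k measure)) = (\<integral>\<^sup>+ y. f y \<partial>distr lborel borel uminus)"
    by simp
  also have "\<dots> = (\<integral>\<^sup>+ y. f (- y) \<partial>lborel)"
    by (subst nn_integral_distr) auto
  finally show "(\<integral>\<^sup>+ y. f (- y) \<partial>lborel) = (\<integral>\<^sup>+ y. f y \<partial>lborel)" by simp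
qed

lemma mpres_rot:
  fixes i j :: "'k::euclidean_space"
  assumes i: "i \<in> Basis" and j: "j \<in> Basis" and ij: "i \<noteq> j"
    and cs: "c\<^sup>2 + s\<^sup>2 = 1" and s0: "s \<noteq> 0"
  shows "mpres (\<lambda>y. y + ((c - 1) * (y \<bullet> i) - s * (y \<bullet> j)) *\<^sub>R i + (s * (y \<bullet> i) + (c - 1) * (y \<bullet> j)) *\<^sub>R j)"
    (is "mpres ?R")
proof -
  define \<alpha> where "\<alpha> = (c - 1) / s"
  define H1 where "H1 = (\<lambda>y::'k. y + (\<alpha> * (y \<bullet> j)) *\<^sub>R i)"
  define H2 where "H2 = (\<lambda>y::'k. y + (s * (y \<bullet> i)) *\<^sub>R j)"
  have ii: "i \<bullet> i = 1" and jj: "j \<bullet> j = 1" and ijz: "i \<bullet> j = 0" and jiz: "j \<bullet> i = 0"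
    using i j ij by (auto simp: inner_Basis)
  have comp: "?R y = H1 (H2 (H1 y))" for y
  proof -
    have "H1 (H2 (H1 y)) = (y + (\<alpha> * (y \<bullet> j)) *\<^sub>R i + (s * ((y \<bullet> i) + \<alpha> * (y \<bullet> j))) *\<^sub>R j)
        + (\<alpha> * ((y \<bullet> j) + s * ((y \<bullet> i) + \<alpha> * (y \<bullet> j)))) *\<^sub>R i"
      by (simp add: H1_def H2_def inner_simps ii jj ijz jiz)
    also have "\<dots> = y + (\<alpha> * (y \<bullet> j) + \<alpha> * ((y \<bullet> j) + s * ((y \<bullet> i) + \<alpha> * (y \<bullet> j)))) *\<^sub>R i
        + (s * ((y \<bullet> i) + \<alpha> * (y \<bullet> j))) *\<^sub>R j"
      by (simp only: scaleR_add_left add_ac)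
    also have "\<alpha> * (y \<bullet> j) + \<alpha> * ((y \<bullet> j) + s * ((y \<bullet> i) + \<alpha> * (y \<bullet> j))) = (c - 1) * (y \<bullet> i) - s * (y \<bullet> j)"
    proof -
      have e1: "\<alpha> * s = c - 1" using s0 unfolding \<alpha>_def by simp
      have "\<alpha> * (2 + \<alpha> * s) = (c - 1) * (c + 1) / s" unfolding e1 unfolding \<alpha>_def by (simp add: algebra_simps)
      also have "(c - 1) * (c + 1) = - (s * s)" using cs by (simp add: power2_eq_square algebra_simps)
      finally have e2: "\<alpha> * (2 + \<alpha> * s) = - s" using s0 by simp
      have "\<alpha> * (y \<bullet> j) + \<alpha> * ((y \<bullet> j) + s * ((y \<bullet> i) + \<alpha> * (y \<bullet> j)))
          = (\<alpha> * (2 + \<alpha> * s)) * (y \<bullet> j) + (\<alpha> * s) * (y \<bullet> i)" by (simp add: algebra_simps)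
      then show ?thesis by (subst (asm) e2, subst (asm) e1) simp
    qed
    also have "s * ((y \<bullet> i) + \<alpha> * (y \<bullet> j)) = s * (y \<bullet> i) + (c - 1) * (y \<bullet> j)"
      using s0 unfolding \<alpha>_def by (simp add: field_simps)
    finally show ?thesis by simp
  qed
  have lin: "linear ?R"
    unfolding linear_iff by (auto simp: inner_simps algebra_simps)
  show ?thesis
    unfolding mpres_def
  proof (intro conjI allI impI)
    show "linear ?R" by (rule lin)
  next
    fix y :: 'k
    let ?a = "y \<bullet> i" and ?b = "y \<bullet> j"
    have "?R y \<bullet> ?R y = y \<bullet> y + 2 * (((c - 1) * ?a - s * ?b) * ?a + (s * ?a + (c - 1) * ?b) * ?b)
       + ((c - 1) * ?a - s * ?b)\<^sup>2 + (s * ?a + (c - 1) * ?b)\<^sup>2"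
      by (simp add: inner_simps ii jj ijz jiz inner_commute power2_eq_square algebra_simps)
    also have "\<dots> = y \<bullet> y + (c\<^sup>2 + s\<^sup>2 - 1) * (?a\<^sup>2 + ?b\<^sup>2)"
      by (simp add: power2_eq_square algebra_simps)
    also have "\<dots> = y \<bullet> y" using cs by simp
    finally show "norm (?R y) = norm y" by (simp add: norm_eq_sqrt_inner)
  next
    fix f :: "'k \<Rightarrow> ennreal" assume f[measurable]: "f \<in> borel_measurable borel"
    have m1: "(\<lambda>y. f (H1 y)) \<in> borel_measurable borel" unfolding H1_def by measurable
    have m2: "(\<lambda>y. f (H1 (H2 y))) \<in> borel_measurable borel" unfolding H1_def H2_def by measurable
    have "(\<integral>\<^sup>+ y. f (?R y) \<partial>lborel) = (\<integral>\<^sup>+ y. (\<lambda>y. f (H1 (H2 y))) (y + (\<alpha> * (y \<bullet> j)) *\<^sub>R i) \<partial>lborel)"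
      by (simp add: comp H1_def)
    also have "\<dots> = (\<integral>\<^sup>+ y. f (H1 (H2 y)) \<partial>lborel)"
      by (rule shear_preserves[OF i j ij m2])
    also have "\<dots> = (\<integral>\<^sup>+ y. (\<lambda>y. f (H1 y)) (y + (s * (y \<bullet> i)) *\<^sub>R j) \<partial>lborel)"
      by (simp add: H2_def)
    also have "\<dots> = (\<integral>\<^sup>+ y. f (H1 y) \<partial>lborel)"
      using ij by (intro shear_preserves[OF j i _ m1]) auto
    also have "\<dots> = (\<integral>\<^sup>+ y. f y \<partial>lborel)"
      unfolding H1_def by (rule shear_preserves[OF i j ij f])
    finally show "(\<integral>\<^sup>+ y. f (?R y) \<partial>lborel) = (\<integral>\<^sup>+ y. f y \<partial>lborel)" .
  qed
qed


lemma mpres_id: "mpres (\<lambda>y::'k::euclidean_space. y)"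
  unfolding mpres_def using linear_id by (simp add: id_def)

lemma mpres_to_basis:
  fixes b0 :: "'k::euclidean_space"
  assumes b0: "b0 \<in> Basis"
  shows "\<exists>T. mpres T \<and> T u = norm u *\<^sub>R b0"
proof -
  have "\<forall>u::'k. card {b\<in>Basis. b \<noteq> b0 \<and> u \<bullet> b \<noteq> 0} = n \<longrightarrow> (\<exists>T. mpres T \<and> T u = norm u *\<^sub>R b0)" for n
  proof (induction n rule: less_induct)
    case (less n)
    show ?case
    proof (intro allI impI)
      fix u :: 'k
      assume n: "card {b\<in>Basis. b \<noteq> b0 \<and> u \<bullet> b \<noteq> 0} = n"
      show "\<exists>T. mpres T \<and> T u = norm u *\<^sub>R b0"
      proof (cases "\<exists>b\<in>Basis. b \<noteq> b0 \<and> u \<bullet> b \<noteq> 0")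
        case False
        have u: "u = (u \<bullet> b0) *\<^sub>R b0"
        proof -
          have "u = (\<Sum>b\<in>Basis. (u \<bullet> b) *\<^sub>R b)" by (simp add: euclidean_representation)
          also have "\<dots> = (\<Sum>b\<in>Basis. if b = b0 then (u \<bullet> b0) *\<^sub>R b0 else 0)"
            using False by (intro sum.cong) auto
          also have "\<dots> = (u \<bullet> b0) *\<^sub>R b0" using b0 by (simp add: sum.delta)
          finally show ?thesis .
        qed
        have nu: "norm u = \<bar>u \<bullet> b0\<bar>" using b0 by (subst u) simp
        show ?thesis
        proof (cases "u \<bullet> b0 \<ge> 0")
          case True
          then show ?thesis using mpres_id nu u by (intro exI[of _ "\<lambda>y. y"]) auto
        next
          case False
          have "- u = norm u *\<^sub>R b0" using False nu by (subst u) simp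
          then show ?thesis using mpres_uminus by (intro exI[of _ uminus]) auto
        qed
      next
        case True
        then obtain b where b: "b \<in> Basis" "b \<noteq> b0" "u \<bullet> b \<noteq> 0" by blast
        define r where "r = sqrt ((u \<bullet> b0)\<^sup>2 + (u \<bullet> b)\<^sup>2)"
        have r0: "r > 0" unfolding r_def using b(3) by (simp add: add_nonneg_pos)
        have rr: "r\<^sup>2 = (u \<bullet> b0)\<^sup>2 + (u \<bullet> b)\<^sup>2" unfolding r_def by simp
        define c where "c = (u \<bullet> b0) / r"
        define s where "s = - (u \<bullet> b) / r"
        have cs: "c\<^sup>2 + s\<^sup>2 = 1" unfolding c_def s_def using r0 rr b(3)
          by (simp add: power_divide add_divide_distrib[symmetric])
        have s0: "s \<noteq> 0" unfolding s_def using r0 b(3) by simp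
        define R where "R = (\<lambda>y. y + ((c - 1) * (y \<bullet> b0) - s * (y \<bullet> b)) *\<^sub>R b0 + (s * (y \<bullet> b0) + (c - 1) * (y \<bullet> b)) *\<^sub>R b)"
        have mR: "mpres R" unfolding R_def using mpres_rot[OF b0 b(1) b(2)[symmetric] cs s0] .
        have bb0: "b \<bullet> b0 = 0" "b0 \<bullet> b = 0" using b b0 by (auto simp: inner_Basis)
        have bb: "b \<bullet> b = 1" using b(1) by simp
        have Rb: "R u \<bullet> b = 0"
        proof -
          have "R u \<bullet> b = u \<bullet> b + ((c - 1) * (u \<bullet> b0) - s * (u \<bullet> b)) * 0 + (s * (u \<bullet> b0) + (c - 1) * (u \<bullet> b)) * 1"
            unfolding R_def inner_add_left inner_scaleR_left bb0 bb by simp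
          also have "\<dots> = s * (u \<bullet> b0) + c * (u \<bullet> b)" by (simp add: algebra_simps)
          also have "\<dots> = 0" unfolding c_def s_def by (simp add: field_simps)
          finally show ?thesis .
        qed
        have Rother: "R u \<bullet> b' = u \<bullet> b'" if "b' \<in> Basis" "b' \<noteq> b" "b' \<noteq> b0" for b'
          using that b b0 by (simp add: R_def inner_simps inner_Basis)
        have sub: "{b'\<in>Basis. b' \<noteq> b0 \<and> R u \<bullet> b' \<noteq> 0} \<subseteq> {b'\<in>Basis. b' \<noteq> b0 \<and> u \<bullet> b' \<noteq> 0} - {b}"
        proof
          fix x assume x: "x \<in> {b'\<in>Basis. b' \<noteq> b0 \<and> R u \<bullet> b' \<noteq> 0}"
          show "x \<in> {b'\<in>Basis. b' \<noteq> b0 \<and> u \<bullet> b' \<noteq> 0} - {b}"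
          proof (cases "x = b")
            case True then show ?thesis using x Rb by simp
          next
            case False then show ?thesis using x Rother[of x] by simp
          qed
        qed
        have "card {b'\<in>Basis. b' \<noteq> b0 \<and> R u \<bullet> b' \<noteq> 0} \<le> card ({b'\<in>Basis. b' \<noteq> b0 \<and> u \<bullet> b' \<noteq> 0} - {b})"
          by (intro card_mono sub) auto
        also have "\<dots> < n" unfolding n[symmetric] using b
          by (intro card_Diff1_less) auto
        finally have lt: "card {b'\<in>Basis. b' \<noteq> b0 \<and> R u \<bullet> b' \<noteq> 0} < n" .
        obtain T where T: "mpres T" "T (R u) = norm (R u) *\<^sub>R b0"
          using less.IH[OF lt] by blast
        have "norm (R u) = norm u" using mR by (simp add: mpres_def)
        then show ?thesis using T mR mpres_comp[OF T(1) mR]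
          by (intro exI[of _ "T \<circ> R"]) auto
      qed
    qed
  qed
  then show ?thesis by blast
qed

lemma linear_isometry_inner:
  assumes "linear T" "\<And>y. norm (T y) = norm y"
  shows "T x \<bullet> T y = x \<bullet> y"
proof -
  have "T (x + y) \<bullet> T (x + y) = (x + y) \<bullet> (x + y)"
    using assms(2)[of "x + y"] by (metis power2_norm_eq_inner)
  moreover have "T x \<bullet> T x = x \<bullet> x" "T y \<bullet> T y = y \<bullet> y"
    using assms(2) by (metis power2_norm_eq_inner)+
  moreover have "T (x + y) = T x + T y" using assms(1) by (simp add: linear_add)
  ultimately show ?thesis by (simp add: inner_simps inner_commute)
qed

lemma cap_rot:
  fixes u b0 :: "'k::euclidean_space"
  assumes b0: "b0 \<in> Basis" and u: "norm u = 1"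
  shows "emeasure lborel {y. norm y \<le> r \<and> s \<le> u \<bullet> y} = emeasure lborel {y. norm y \<le> r \<and> s \<le> y \<bullet> b0}"
proof -
  obtain T where T: "mpres T" "T u = b0" using mpres_to_basis[OF b0, of u] u by auto
  have lT: "linear T" and nT: "\<And>y. norm (T y) = norm y" using T by (auto simp: mpres_def)
  have H: "\<And>f::'k\<Rightarrow>ennreal. f \<in> borel_measurable borel \<Longrightarrow> (\<integral>\<^sup>+ y. f (T y) \<partial>lborel) = (\<integral>\<^sup>+ y. f y \<partial>lborel)"
    using T(1) by (simp add: mpres_def)
  have S1[measurable]: "{y::'k. norm y \<le> r \<and> s \<le> y \<bullet> b0} \<in> sets borel" by measurable
  have S2[measurable]: "{y::'k. norm y \<le> r \<and> s \<le> u \<bullet> y} \<in> sets borel" by measurable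
  have "emeasure lborel {y. norm y \<le> r \<and> s \<le> y \<bullet> b0} = (\<integral>\<^sup>+ y. indicator {y::'k. norm y \<le> r \<and> s \<le> y \<bullet> b0} y \<partial>lborel)"
    by (simp add: nn_integral_indicator)
  also have "\<dots> = (\<integral>\<^sup>+ y. indicator {y::'k. norm y \<le> r \<and> s \<le> y \<bullet> b0} (T y) \<partial>lborel)"
    using H[of "indicator {y::'k. norm y \<le> r \<and> s \<le> y \<bullet> b0}"] by simp
  also have "\<dots> = (\<integral>\<^sup>+ y. indicator {y::'k. norm y \<le> r \<and> s \<le> u \<bullet> y} y \<partial>lborel)"
  proof (intro nn_integral_cong)
    fix y
    have "T y \<bullet> b0 = u \<bullet> y" using linear_isometry_inner[OF lT nT, of y u] T(2) by (simp add: inner_commute)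
    then show "indicator {y::'k. norm y \<le> r \<and> s \<le> y \<bullet> b0} (T y) = (indicator {y::'k. norm y \<le> r \<and> s \<le> u \<bullet> y} y :: ennreal)"
      using nT[of y] by (simp add: indicator_def)
  qed
  also have "\<dots> = emeasure lborel {y. norm y \<le> r \<and> s \<le> u \<bullet> y}"
    by (simp add: nn_integral_indicator)
  finally show ?thesis ..
qed



lemma nn_integral_lborel_split_rev:
  fixes g :: "'k::euclidean_space \<Rightarrow> ennreal"
  assumes i: "i \<in> Basis" and [measurable]: "g \<in> borel_measurable borel"
  shows "(\<integral>\<^sup>+ y. g y \<partial>lborel) =
    (\<integral>\<^sup>+ t. (\<integral>\<^sup>+ x. g ((\<Sum>b\<in>Basis - {i}. x b *\<^sub>R b) + t *\<^sub>R i) \<partial>(Pi\<^sub>M (Basis - {i}) (\<lambda>_. lborel))) \<partial>lborel)"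
proof -
  interpret product_sigma_finite "\<lambda>_. lborel" by standard
  have B: "Basis = insert i (Basis - {i})" using i by auto
  have "(\<integral>\<^sup>+ y. g y \<partial>lborel) = (\<integral>\<^sup>+ f. g (\<Sum>b\<in>Basis. f b *\<^sub>R b) \<partial>(Pi\<^sub>M Basis (\<lambda>_. lborel)))"
    by (subst lborel_eq) (simp add: nn_integral_distr)
  also have "\<dots> = (\<integral>\<^sup>+ f. g (\<Sum>b\<in>Basis. f b *\<^sub>R b) \<partial>(Pi\<^sub>M (insert i (Basis - {i})) (\<lambda>_. lborel)))"
    using B by simp
  also have "\<dots> = (\<integral>\<^sup>+ t. (\<integral>\<^sup>+ x. g (\<Sum>b\<in>Basis. (x(i:=t)) b *\<^sub>R b) \<partial>(Pi\<^sub>M (Basis - {i}) (\<lambda>_. lborel))) \<partial>lborel)"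
    by (subst product_nn_integral_insert_rev) auto
  also have "\<dots> = (\<integral>\<^sup>+ t. (\<integral>\<^sup>+ x. g ((\<Sum>b\<in>Basis - {i}. x b *\<^sub>R b) + t *\<^sub>R i) \<partial>(Pi\<^sub>M (Basis - {i}) (\<lambda>_. lborel))) \<partial>lborel)"
  proof (intro nn_integral_cong)
    fix x t
    have "(\<Sum>b\<in>Basis. (x(i:=t)) b *\<^sub>R b) = (\<Sum>b\<in>insert i (Basis - {i}). (x(i:=t)) b *\<^sub>R b)"
      using B by simp
    also have "\<dots> = t *\<^sub>R i + (\<Sum>b\<in>Basis - {i}. (x(i:=t)) b *\<^sub>R b)"
      by (subst sum.insert) auto
    also have "(\<Sum>b\<in>Basis - {i}. (x(i:=t)) b *\<^sub>R b) = (\<Sum>b\<in>Basis - {i}. x b *\<^sub>R b)"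
      by (intro sum.cong) auto
    finally show "g (\<Sum>b\<in>Basis. (x(i:=t)) b *\<^sub>R b) = g ((\<Sum>b\<in>Basis - {i}. x b *\<^sub>R b) + t *\<^sub>R i)"
      by (simp add: add.commute)
  qed
  finally show ?thesis .
qed

lemma inner_sum_basis_self:
  fixes A :: "'k::euclidean_space set"
  assumes "A \<subseteq> Basis"
  shows "(\<Sum>b\<in>A. x b *\<^sub>R b) \<bullet> (\<Sum>b\<in>A. x b *\<^sub>R b) = (\<Sum>b\<in>A. (x b)\<^sup>2)"
proof -
  have fin: "finite A" using assms finite_Basis finite_subset by blast
  have "\<And>b. b \<in> A \<Longrightarrow> b \<bullet> (\<Sum>b'\<in>A. x b' *\<^sub>R b') = x b"
  proof -
    fix b assume b: "b \<in> A"
    have "b \<bullet> (\<Sum>b'\<in>A. x b' *\<^sub>R b') = (\<Sum>b'\<in>A. x b' * (b \<bullet> b'))"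
      by (simp add: inner_sum_right)
    also have "\<dots> = (\<Sum>b'\<in>A. if b' = b then x b else 0)"
      using assms b by (intro sum.cong refl) (auto simp: inner_Basis subset_eq)
    also have "\<dots> = x b" using fin b by simp
    finally show "b \<bullet> (\<Sum>b'\<in>A. x b' *\<^sub>R b') = x b" .
  qed
  then show ?thesis by (simp add: inner_sum_left power2_eq_square)
qed

lemma inner_sum_basis_other:
  fixes A :: "'k::euclidean_space set"
  assumes "A \<subseteq> Basis" "i \<in> Basis" "i \<notin> A"
  shows "(\<Sum>b\<in>A. x b *\<^sub>R b) \<bullet> i = 0"
  using assms by (auto simp: inner_sum_left inner_Basis intro!: sum.neutral)

lemma cap_coord:
  fixes b0 :: "'k::euclidean_space"
  assumes b0: "b0 \<in> Basis" and r: "r > 0" and s: "-r \<le> s"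
  shows "emeasure lborel {y::'k. norm y \<le> r \<and> s \<le> y \<bullet> b0} =
    (\<integral>\<^sup>+ t. indicator {s..r} t * ennreal (unit_ball_vol (real (DIM('k) - 1)) * sqrt (r\<^sup>2 - t\<^sup>2) ^ (DIM('k) - 1)) \<partial>lborel)"
proof -
  interpret product_sigma_finite "\<lambda>_. lborel" by standard
  define A where "A = Basis - {b0}"
  have cA: "card A = DIM('k) - 1" unfolding A_def using b0 by (simp add: card_Diff_singleton)
  have Asub: "A \<subseteq> Basis" and b0A: "b0 \<notin> A" and finA: "finite A" unfolding A_def by auto
  let ?P = "Pi\<^sub>M A (\<lambda>_. (lborel::real measure))"
  let ?S = "{y::'k. norm y \<le> r \<and> s \<le> y \<bullet> b0}"
  have S[measurable]: "?S \<in> sets borel" by measurable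
  have "emeasure lborel ?S = (\<integral>\<^sup>+ y. indicator ?S y \<partial>lborel)"
    by (simp add: nn_integral_indicator)
  also have "\<dots> = (\<integral>\<^sup>+ t. (\<integral>\<^sup>+ x. indicator ?S ((\<Sum>b\<in>A. x b *\<^sub>R b) + t *\<^sub>R b0) \<partial>?P) \<partial>lborel)"
    unfolding A_def by (rule nn_integral_lborel_split_rev[OF b0]) measurable
  also have "\<dots> = (\<integral>\<^sup>+ t. (\<integral>\<^sup>+ x. indicator {s..r} t * indicator ({f. sqrt (\<Sum>i\<in>A. (f i)\<^sup>2) \<le> sqrt (r\<^sup>2 - t\<^sup>2)} \<inter> space ?P) x \<partial>?P) \<partial>lborel)"
  proof (intro nn_integral_cong)
    fix t :: real and x assume x: "x \<in> space ?P"
    define w where "w = (\<Sum>b\<in>A. x b *\<^sub>R b)"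
    have ww: "w \<bullet> w = (\<Sum>i\<in>A. (x i)\<^sup>2)" unfolding w_def by (rule inner_sum_basis_self[OF Asub])
    have wb: "w \<bullet> b0 = 0" unfolding w_def by (rule inner_sum_basis_other[OF Asub b0 b0A])
    have "(norm (w + t *\<^sub>R b0))\<^sup>2 = (w + t *\<^sub>R b0) \<bullet> (w + t *\<^sub>R b0)"
      by (simp only: power2_norm_eq_inner)
    also have "\<dots> = w \<bullet> w + t\<^sup>2" using b0 wb by (simp add: inner_simps inner_commute[of b0 w] power2_eq_square)
    finally have nrm: "(norm (w + t *\<^sub>R b0))\<^sup>2 = (\<Sum>i\<in>A. (x i)\<^sup>2) + t\<^sup>2" unfolding ww .
    have cb: "(w + t *\<^sub>R b0) \<bullet> b0 = t" using b0 by (simp add: inner_simps wb)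
    have Q: "(\<Sum>i\<in>A. (x i)\<^sup>2) \<ge> 0" by (simp add: sum_nonneg)
    have "(norm (w + t *\<^sub>R b0) \<le> r \<and> s \<le> t) \<longleftrightarrow> (t \<in> {s..r} \<and> sqrt (\<Sum>i\<in>A. (x i)\<^sup>2) \<le> sqrt (r\<^sup>2 - t\<^sup>2))"
    proof -
      have "norm (w + t *\<^sub>R b0) \<le> r \<longleftrightarrow> (norm (w + t *\<^sub>R b0))\<^sup>2 \<le> r\<^sup>2"
        using r by (simp add: abs_le_square_iff[symmetric] power2_le_iff_abs_le)
      also have "\<dots> \<longleftrightarrow> (\<Sum>i\<in>A. (x i)\<^sup>2) \<le> r\<^sup>2 - t\<^sup>2" using nrm by linarith
      finally have e: "norm (w + t *\<^sub>R b0) \<le> r \<longleftrightarrow> (\<Sum>i\<in>A. (x i)\<^sup>2) \<le> r\<^sup>2 - t\<^sup>2" .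
      have "(\<Sum>i\<in>A. (x i)\<^sup>2) \<le> r\<^sup>2 - t\<^sup>2 \<Longrightarrow> t \<le> r"
      proof -
        assume "(\<Sum>i\<in>A. (x i)\<^sup>2) \<le> r\<^sup>2 - t\<^sup>2"
        then have "t\<^sup>2 \<le> r\<^sup>2" using Q by simp
        then show "t \<le> r" using r by (simp add: power2_le_iff_abs_le)
      qed
      then show ?thesis using e by auto
    qed
    then show "indicator ?S ((\<Sum>b\<in>A. x b *\<^sub>R b) + t *\<^sub>R b0) =
      indicator {s..r} t * (indicator ({f. sqrt (\<Sum>i\<in>A. (f i)\<^sup>2) \<le> sqrt (r\<^sup>2 - t\<^sup>2)} \<inter> space ?P) x :: ennreal)"
      using x cb unfolding w_def[symmetric] by (auto simp: indicator_def)
  qed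
  also have "\<dots> = (\<integral>\<^sup>+ t. indicator {s..r} t * emeasure ?P ({f. sqrt (\<Sum>i\<in>A. (f i)\<^sup>2) \<le> sqrt (r\<^sup>2 - t\<^sup>2)} \<inter> space ?P) \<partial>lborel)"
    by (intro nn_integral_cong, subst nn_integral_cmult) (auto simp: finA)
  also have "\<dots> = (\<integral>\<^sup>+ t. indicator {s..r} t * ennreal (unit_ball_vol (real (DIM('k) - 1)) * sqrt (r\<^sup>2 - t\<^sup>2) ^ (DIM('k) - 1)) \<partial>lborel)"
  proof (intro nn_integral_cong_AE)
    have "AE t in lborel. t \<notin> {-r, r}"
      by (intro AE_not_in countable_imp_null_set_lborel) auto
    then show "AE t in lborel. indicator {s..r} t * emeasure ?P ({f. sqrt (\<Sum>i\<in>A. (f i)\<^sup>2) \<le> sqrt (r\<^sup>2 - t\<^sup>2)} \<inter> space ?P)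
       = indicator {s..r} t * ennreal (unit_ball_vol (real (DIM('k) - 1)) * sqrt (r\<^sup>2 - t\<^sup>2) ^ (DIM('k) - 1))"
    proof eventually_elim
      case (elim t)
      show ?case
      proof (cases "t \<in> {s..r}")
        case True
        then have "\<bar>t\<bar> < r" using elim s r by auto
        then have "\<bar>t\<bar>\<^sup>2 < r\<^sup>2" by (intro power_strict_mono) auto
        then have "t\<^sup>2 < r\<^sup>2" by simp
        then have "sqrt (r\<^sup>2 - t\<^sup>2) > 0" by simp
        then have E: "emeasure ?P ({f. sqrt (\<Sum>i\<in>A. (f i)\<^sup>2) \<le> sqrt (r\<^sup>2 - t\<^sup>2)} \<inter> space ?P) =
            ennreal (unit_ball_vol (real (card A)) * sqrt (r\<^sup>2 - t\<^sup>2) ^ card A)"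
          by (intro emeasure_cball_aux[OF finA])
        show ?thesis using True unfolding E cA by simp
      qed simp
    qed
  qed
  finally show ?thesis .
qed


lemma cball_upper:
  fixes b0 :: "'k::euclidean_space"
  assumes b0: "b0 \<in> Basis" and r: "r > 0"
  shows "emeasure lborel (cball (0::'k) r) \<le>
    ennreal (2 * r * (unit_ball_vol (real (DIM('k) - 1)) * r ^ (DIM('k) - 1)))"
proof -
  let ?V = "unit_ball_vol (real (DIM('k) - 1))"
  have V: "?V \<ge> 0" by simp
  have "cball (0::'k) r = {y. norm y \<le> r \<and> -r \<le> y \<bullet> b0}"
  proof (intro set_eqI iffI)
    fix y :: 'k assume "y \<in> cball 0 r"
    then have ny: "norm y \<le> r" by simp
    then have "\<bar>y \<bullet> b0\<bar> \<le> r" by (rule norm_bound_Basis_le[OF b0])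
    then show "y \<in> {y. norm y \<le> r \<and> -r \<le> y \<bullet> b0}" using ny by auto
  qed simp
  then have "emeasure lborel (cball (0::'k) r) =
    (\<integral>\<^sup>+ t. indicator {-r..r} t * ennreal (?V * sqrt (r\<^sup>2 - t\<^sup>2) ^ (DIM('k) - 1)) \<partial>lborel)"
    using cap_coord[OF b0 r, of "-r"] by simp
  also have "\<dots> \<le> (\<integral>\<^sup>+ t. ennreal (?V * r ^ (DIM('k) - 1)) * indicator {-r..r} t \<partial>lborel)"
  proof (intro nn_integral_mono)
    fix t :: real
    show "indicator {-r..r} t * ennreal (?V * sqrt (r\<^sup>2 - t\<^sup>2) ^ (DIM('k) - 1))
        \<le> ennreal (?V * r ^ (DIM('k) - 1)) * indicator {-r..r} t"
    proof (cases "t \<in> {-r..r}")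
      case True
      have "sqrt (r\<^sup>2 - t\<^sup>2) \<le> sqrt (r\<^sup>2)" by (rule real_sqrt_le_mono) simp
      then have "sqrt (r\<^sup>2 - t\<^sup>2) \<le> r" using r by simp
      moreover have "0 \<le> sqrt (r\<^sup>2 - t\<^sup>2)"
      proof -
        have "\<bar>t\<bar> \<le> r" using True by auto
        then have "\<bar>t\<bar>\<^sup>2 \<le> r\<^sup>2" by (intro power_mono) auto
        then show ?thesis by simp
      qed
      ultimately have "sqrt (r\<^sup>2 - t\<^sup>2) ^ (DIM('k) - 1) \<le> r ^ (DIM('k) - 1)"
        by (intro power_mono) auto
      then have "?V * sqrt (r\<^sup>2 - t\<^sup>2) ^ (DIM('k) - 1) \<le> ?V * r ^ (DIM('k) - 1)"
        using V by (intro mult_left_mono) auto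
      then show ?thesis using True by (simp add: ennreal_leI)
    qed simp
  qed
  also have "\<dots> = ennreal (?V * r ^ (DIM('k) - 1)) * emeasure lborel {-r..r}"
    by (rule nn_integral_cmult_indicator) simp
  also have "\<dots> = ennreal (2 * r * (?V * r ^ (DIM('k) - 1)))"
    using r V by (simp add: ennreal_mult'[symmetric] mult_ac)
  finally show ?thesis .
qed

lemma cap_lower:
  fixes b0 :: "'k::euclidean_space"
  assumes b0: "b0 \<in> Basis" and r: "r > 0" and s: "0 \<le> s" "2 * s \<le> r"
  shows "ennreal (s * (unit_ball_vol (real (DIM('k) - 1)) * sqrt (r\<^sup>2 - 4 * s\<^sup>2) ^ (DIM('k) - 1)))
    \<le> emeasure lborel {y::'k. norm y \<le> r \<and> s \<le> y \<bullet> b0}"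
proof -
  let ?V = "unit_ball_vol (real (DIM('k) - 1))"
  let ?c = "?V * sqrt (r\<^sup>2 - 4 * s\<^sup>2) ^ (DIM('k) - 1)"
  have V: "?V \<ge> 0" by simp
  have "(2 * s)\<^sup>2 \<le> r\<^sup>2" using s by (intro power_mono) auto
  then have nn0: "0 \<le> r\<^sup>2 - 4 * s\<^sup>2" by (simp add: power_mult_distrib)
  have c0: "?c \<ge> 0" using V nn0 by simp
  have "ennreal (s * ?c) = ennreal ?c * emeasure lborel {s..2 * s}"
    using s c0 by (simp add: ennreal_mult'[symmetric] mult_ac)
  also have "\<dots> = (\<integral>\<^sup>+ t. ennreal ?c * indicator {s..2 * s} t \<partial>lborel)"
    by (rule nn_integral_cmult_indicator[symmetric]) simp
  also have "\<dots> \<le> (\<integral>\<^sup>+ t. indicator {s..r} t * ennreal (?V * sqrt (r\<^sup>2 - t\<^sup>2) ^ (DIM('k) - 1)) \<partial>lborel)"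
  proof (intro nn_integral_mono)
    fix t :: real
    show "ennreal ?c * indicator {s..2 * s} t \<le> indicator {s..r} t * ennreal (?V * sqrt (r\<^sup>2 - t\<^sup>2) ^ (DIM('k) - 1))"
    proof (cases "t \<in> {s..2 * s}")
      case True
      have t2: "t\<^sup>2 \<le> (2 * s)\<^sup>2" using True s by (intro power_mono) auto
      have "(2 * s)\<^sup>2 \<le> r\<^sup>2" using s by (intro power_mono) auto
      then have nn: "0 \<le> r\<^sup>2 - 4 * s\<^sup>2" by (simp add: power_mult_distrib)
      have "sqrt (r\<^sup>2 - 4 * s\<^sup>2) \<le> sqrt (r\<^sup>2 - t\<^sup>2)" using t2 by (simp add: power_mult_distrib)
      then have "sqrt (r\<^sup>2 - 4 * s\<^sup>2) ^ (DIM('k) - 1) \<le> sqrt (r\<^sup>2 - t\<^sup>2) ^ (DIM('k) - 1)"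
        using nn by (intro power_mono) auto
      then have "?c \<le> ?V * sqrt (r\<^sup>2 - t\<^sup>2) ^ (DIM('k) - 1)"
        using V by (intro mult_left_mono) auto
      moreover have "t \<in> {s..r}" using True s by auto
      ultimately show ?thesis using True by (simp add: ennreal_leI)
    qed simp
  qed
  also have "\<dots> = emeasure lborel {y::'k. norm y \<le> r \<and> s \<le> y \<bullet> b0}"
    using cap_coord[OF b0 r, of s] s r by simp
  finally show ?thesis .
qed



lemma ln32_bounds: "1/3 \<le> ln (3/2::real)" "ln (3/2::real) \<le> 9/20"
proof -
  have "ln (2/3::real) \<le> 2/3 - 1" by (rule ln_le_minus_one) simp
  moreover have "ln (2/3::real) = - ln (3/2)" by (simp add: ln_div)
  ultimately show "1/3 \<le> ln (3/2::real)" by simp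
  have s: "sqrt (3/2::real) \<le> 49/40"
    by (rule real_le_lsqrt) (auto simp: power2_eq_square)
  have "ln (sqrt (3/2::real)) \<le> sqrt (3/2) - 1" by (rule ln_le_minus_one) simp
  moreover have "ln (sqrt (3/2::real)) = ln (3/2) / 2" by (simp add: ln_sqrt)
  ultimately show "ln (3/2::real) \<le> 9/20" using s by simp
qed

lemma final_ineq:
  fixes D m :: nat and \<zeta> :: real
  assumes D: "D \<ge> 1" and m: "m \<le> D" and z: "\<zeta> > 0"
  defines "\<sigma> \<equiv> \<zeta> * ln (3/2) / sqrt (real D)"
  shows "1 / (20 * sqrt (real D)) \<le> \<sigma> * sqrt (\<zeta>\<^sup>2 - 4 * \<sigma>\<^sup>2) ^ m / (2 * \<zeta> * \<zeta> ^ m)"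
proof -
  define c where "c = ln (3/2::real)"
  have c1: "1/3 \<le> c" and c2: "c \<le> 9/20" using ln32_bounds unfolding c_def by auto
  have sD: "sqrt (real D) \<ge> 1" using D by simp
  define a where "a = 4 * c\<^sup>2 / real D"
  have a0: "0 \<le> a" unfolding a_def by simp
  have c2sq: "c\<^sup>2 \<le> (9/20)\<^sup>2" using c1 c2 by (intro power_mono) auto
  have a4: "4 * c\<^sup>2 \<le> 81/100" using c2sq by (simp add: power2_eq_square)
  have a1: "a \<le> 4 * c\<^sup>2" unfolding a_def using D by (simp add: divide_le_eq) (simp add: mult_le_cancel_left1 less_le)
  have aa: "a \<le> 81/100" using a1 a4 by simp
  have sig: "\<sigma> = \<zeta> * (c / sqrt (real D))" unfolding \<sigma>_def c_def by simp
  have "\<zeta>\<^sup>2 - 4 * \<sigma>\<^sup>2 = \<zeta>\<^sup>2 * (1 - a)"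
    unfolding sig a_def using D by (simp add: power_mult_distrib power_divide algebra_simps)
  then have sq: "sqrt (\<zeta>\<^sup>2 - 4 * \<sigma>\<^sup>2) = \<zeta> * sqrt (1 - a)" using z by (simp add: real_sqrt_mult)
  define x where "x = sqrt (1 - a)"
  have x0: "0 \<le> x" and x1: "x \<le> 1" unfolding x_def using a0 aa by auto
  have "x ^ D \<le> x ^ m" using x0 x1 m by (intro power_decreasing) auto
  have "(1 - a) ^ D \<ge> 1 - real D * a"
    using Bernoulli_inequality[of "-a" D] aa by simp
  also have "real D * a = 4 * c\<^sup>2" unfolding a_def using D by simp
  finally have "(x ^ D)\<^sup>2 \<ge> 1 - 4 * c\<^sup>2" unfolding x_def using a0 aa
    by (simp add: power_mult[symmetric] mult.commute[of _ 2] power_mult real_sqrt_pow2)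
  then have xD: "x ^ D \<ge> sqrt (1 - 4 * c\<^sup>2)"
    using x0 by (simp add: real_le_lsqrt real_sqrt_le_iff' zero_le_power)
  have key: "c * sqrt (1 - 4 * c\<^sup>2) \<ge> 1 / 10"
  proof -
    have "(1/10)\<^sup>2 \<le> c\<^sup>2 * (1 - 4 * c\<^sup>2)"
    proof -
      have "c\<^sup>2 \<ge> (1/3)\<^sup>2" using c1 by (intro power_mono) auto
      moreover have "1 - 4 * c\<^sup>2 \<ge> 19/100" using a4 by simp
      ultimately have "c\<^sup>2 * (1 - 4 * c\<^sup>2) \<ge> (1/3)\<^sup>2 * (19/100)"
        by (intro mult_mono) auto
      then show ?thesis by (simp add: power2_eq_square)
    qed
    then have "1/10 \<le> sqrt (c\<^sup>2 * (1 - 4 * c\<^sup>2))" by (rule real_le_rsqrt)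
    also have "\<dots> = c * sqrt (1 - 4 * c\<^sup>2)" using c1 by (simp add: real_sqrt_mult)
    finally show ?thesis .
  qed
  have "\<sigma> * sqrt (\<zeta>\<^sup>2 - 4 * \<sigma>\<^sup>2) ^ m / (2 * \<zeta> * \<zeta> ^ m) = (c / sqrt (real D)) * x ^ m / 2"
    unfolding sq unfolding sig x_def using z by (simp add: power_mult_distrib field_simps)
  also have "\<dots> \<ge> (c / sqrt (real D)) * sqrt (1 - 4 * c\<^sup>2) / 2"
    using xD \<open>x ^ D \<le> x ^ m\<close> c1 sD by (intro divide_right_mono mult_left_mono) auto
  finally have "\<sigma> * sqrt (\<zeta>\<^sup>2 - 4 * \<sigma>\<^sup>2) ^ m / (2 * \<zeta> * \<zeta> ^ m) \<ge> (c * sqrt (1 - 4 * c\<^sup>2)) / (2 * sqrt (real D))"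
    by simp
  moreover have "(c * sqrt (1 - 4 * c\<^sup>2)) / (2 * sqrt (real D)) \<ge> (1/10) / (2 * sqrt (real D))"
    using key sD by (intro divide_right_mono) auto
  ultimately show ?thesis by simp
qed


theorem lemma13:
  fixes L :: "'a::euclidean_space set"
    and g :: "'k::euclidean_space \<Rightarrow> 'a"
    and pstar h :: 'a
    and \<zeta> :: real
  assumes "DIM('a) \<ge> 2"
    and "subspace L"
    and "linear g" "\<And>y. norm (g y) = norm y" "range g = L"
    and "pstar \<in> L"
    and "\<zeta> > 0"
    and "h \<in> L" "norm h = 1"
  shows "measure (uniform_subspace_ball g pstar \<zeta>)
           {q. h \<bullet> q \<ge> h \<bullet> pstar + \<zeta> * ln (3/2) / sqrt (real DIM('a) - 1)}
         \<ge> 1 / (20 * sqrt (real DIM('a) - 1))"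
proof -
  define D where "D = DIM('a) - 1"
  have D1: "D \<ge> 1" using assms(1) by (simp add: D_def)
  have rD: "real DIM('a) - 1 = real D" using assms(1) by (simp add: D_def of_nat_diff)
  define \<sigma> where "\<sigma> = \<zeta> * ln (3/2) / sqrt (real D)"
  obtain u where hu: "h = g u" using assms(5,8) by auto
  have nu: "norm u = 1" using assms(4,9) hu by metis
  have ginner: "\<And>y. h \<bullet> g y = u \<bullet> y" using linear_isometry_inner[OF assms(3) assms(4)] hu by simp
  have injg: "inj g" unfolding linear_injective_0[OF assms(3)]
    using assms(4) by (metis norm_eq_zero)
  have "independent (g ` Basis)"
    using injg by (intro linear_independent_injective_image[OF assms(3) independent_Basis])
      (auto intro: inj_on_subset)
  then have "card (g ` Basis) \<le> DIM('a)" by (rule independent_card_le)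
  moreover have "card (g ` Basis) = DIM('k)" using injg by (simp add: card_image inj_on_subset)
  ultimately have dimk: "DIM('k) \<le> DIM('a)" by simp
  define m where "m = DIM('k) - 1"
  have mD: "m \<le> D" using dimk by (simp add: m_def D_def)
  obtain b0 :: 'k where b0: "b0 \<in> Basis" using nonempty_Basis by blast
  let ?V = "unit_ball_vol (real (DIM('k) - 1))"
  have V: "?V > 0" by simp
  have c1: "1/3 \<le> ln (3/2::real)" and c2: "ln (3/2::real) \<le> 9/20" using ln32_bounds by auto
  have sD: "sqrt (real D) \<ge> 1" using D1 by simp
  have sig0: "0 \<le> \<sigma>" unfolding \<sigma>_def using assms(7) c1 by simp
  have sig2: "2 * \<sigma> \<le> \<zeta>"
  proof -
    have "ln (3/2::real) / sqrt (real D) \<le> ln (3/2)" using sD c1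
      by (simp add: divide_le_eq)
    then have "2 * (ln (3/2::real) / sqrt (real D)) \<le> 1" using c2 by simp
    then have "\<zeta> * (2 * (ln (3/2::real) / sqrt (real D))) \<le> \<zeta>" using assms(7)
      using mult_left_mono[of "2 * (ln (3/2::real) / sqrt (real D))" 1 \<zeta>] by simp
    then show ?thesis unfolding \<sigma>_def by (simp add: algebra_simps)
  qed
  let ?C = "cball (0::'k) \<zeta>"
  let ?Q = "{q. h \<bullet> q \<ge> h \<bullet> pstar + \<zeta> * ln (3/2) / sqrt (real DIM('a) - 1)}"
  let ?S = "{y::'k. norm y \<le> \<zeta> \<and> \<sigma> \<le> u \<bullet> y}"
  have Qs: "?Q \<in> sets borel" by measurable
  have gm: "(\<lambda>y. pstar + g y) \<in> borel_measurable borel"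
    using linear_borel_measurable[OF assms(3)] by measurable
  have Cfin: "emeasure lborel ?C = ennreal (unit_ball_vol (DIM('k)) * \<zeta> ^ DIM('k))"
    using assms(7) by (simp add: emeasure_cball)
  have Cpos: "unit_ball_vol (DIM('k)) * \<zeta> ^ DIM('k) > 0" using assms(7) by simp
  have pre: "?C \<inter> ((\<lambda>y. pstar + g y) -` ?Q) = ?S"
    using rD unfolding \<sigma>_def by (auto simp: inner_simps ginner)
  have "measure (uniform_subspace_ball g pstar \<zeta>) ?Q =
      measure (uniform_measure lborel ?C) ((\<lambda>y. pstar + g y) -` ?Q \<inter> space (uniform_measure lborel ?C))"
  proof -
    have "measurable (uniform_measure lborel ?C) borel = measurable borel (borel :: 'a measure)"
      by (rule measurable_cong_sets) auto
    then have gm2: "(\<lambda>y. pstar + g y) \<in> uniform_measure lborel ?C \<rightarrow>\<^sub>M borel" using gm by simp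
    show ?thesis unfolding uniform_subspace_ball_def by (rule measure_distr[OF gm2 Qs])
  qed
  also have "\<dots> = measure lborel (?C \<inter> ((\<lambda>y. pstar + g y) -` ?Q)) / measure lborel ?C"
  proof -
    have Cne0: "emeasure lborel ?C \<noteq> 0" and Cnt: "emeasure lborel ?C \<noteq> \<infinity>"
      using Cfin Cpos by (simp_all add: less_imp_neq[symmetric])
    have Bs: "(\<lambda>y. pstar + g y) -` ?Q \<in> sets lborel" using measurable_sets_borel[OF gm Qs] by simp
    show ?thesis using measure_uniform_measure[OF Cne0 Cnt Bs] by simp
  qed
  also have "\<dots> = measure lborel ?S / measure lborel ?C" unfolding pre ..
  finally have eq: "measure (uniform_subspace_ball g pstar \<zeta>) ?Q = measure lborel ?S / measure lborel ?C" .
  define X where "X = \<sigma> * (?V * sqrt (\<zeta>\<^sup>2 - 4 * \<sigma>\<^sup>2) ^ (DIM('k) - 1))"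
  have X0: "X \<ge> 0"
  proof -
    have "(2 * \<sigma>)\<^sup>2 \<le> \<zeta>\<^sup>2" using sig0 sig2 by (intro power_mono) auto
    then have "0 \<le> \<zeta>\<^sup>2 - 4 * \<sigma>\<^sup>2" by (simp add: power_mult_distrib)
    then show ?thesis unfolding X_def using sig0 V by simp
  qed
  define U where "U = 2 * \<zeta> * (?V * \<zeta> ^ (DIM('k) - 1))"
  have Sfin: "emeasure lborel ?S \<noteq> top"
  proof -
    have "emeasure lborel ?S \<le> emeasure lborel ?C" by (intro emeasure_mono) auto
    then show ?thesis using Cfin by (auto simp: top_unique)
  qed
  have "ennreal X \<le> emeasure lborel ?S"
    unfolding X_def cap_rot[OF b0 nu] using cap_lower[OF b0 assms(7) sig0 sig2] .
  then have XS: "X \<le> measure lborel ?S"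
    using Sfin X0 by (simp add: emeasure_eq_ennreal_measure)
  have mC: "measure lborel ?C = unit_ball_vol (DIM('k)) * \<zeta> ^ DIM('k)"
    using Cfin Cpos by (simp add: measure_def)
  have U0: "U \<ge> 0" unfolding U_def using V assms(7) by simp
  have "ennreal (unit_ball_vol (DIM('k)) * \<zeta> ^ DIM('k)) \<le> ennreal U"
    using cball_upper[OF b0 assms(7)] Cfin unfolding U_def by simp
  then have CU: "measure lborel ?C \<le> U" unfolding mC using U0 by (simp add: ennreal_le_iff)
  have Cp: "measure lborel ?C > 0" using Cfin Cpos by (simp add: measure_def)
  have "1 / (20 * sqrt (real DIM('a) - 1)) = 1 / (20 * sqrt (real D))" using rD by simp
  also have "\<dots> \<le> \<sigma> * sqrt (\<zeta>\<^sup>2 - 4 * \<sigma>\<^sup>2) ^ m / (2 * \<zeta> * \<zeta> ^ m)"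
    unfolding \<sigma>_def by (rule final_ineq[OF D1 mD assms(7)])
  also have "\<dots> = X / U"
  proof -
    have "X / U = (?V * (\<sigma> * sqrt (\<zeta>\<^sup>2 - 4 * \<sigma>\<^sup>2) ^ m)) / (?V * (2 * \<zeta> * \<zeta> ^ m))"
      unfolding X_def U_def m_def by (simp only: mult_ac)
    also have "\<dots> = \<sigma> * sqrt (\<zeta>\<^sup>2 - 4 * \<sigma>\<^sup>2) ^ m / (2 * \<zeta> * \<zeta> ^ m)"
      by (rule mult_divide_mult_cancel_left) (use V in linarith)
    finally show ?thesis ..
  qed
  also have "\<dots> \<le> measure lborel ?S / measure lborel ?C"
    using XS CU Cp X0 by (intro frac_le) auto
  finally show ?thesis using eq by simp
qed

end
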